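(* Let $\Omega$ be a metric space and $\tau$ a two-valued measurable cardinal with $|\Omega|\ge\tau$. Then there exist $r>0$ and a subset $Y\subseteq\Omega$ of cardinality $\tau$ such that the metric of $\Omega$ restricted to $Y$ takes only the values $0$ and $r$ (i.e. $d(x,y)=r$ for all distinct $x,y\in Y$).
   Context: A cardinal $\tau$ is two-valued measurable (measurable) if there is a probability measure defined on all subsets of $\tau$, taking only the values $0$ and $1$, vanishing on singletons, whose ideal of null sets is closed under unions of fewer than $\tau$ members. *)

theory Defs
  imports "HOL-Analysis.Analysis" "HOL-Probability.Probability"
begin

text \<open>A cardinal tau is represented by a set T with cardinality tau (card_of T).
  tau is two-valued measurable iff there is a probability measure defined on all
  subsets of T, taking only the values 0 and 1, vanishing on singletons, whose
  ideal of null sets is closed under unions of fewer than tau members.\<close>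

definition two_valued_measurable :: "'b set \<Rightarrow> bool" where
  "two_valued_measurable T \<longleftrightarrow>
     (\<exists>M. space M = T \<and> sets M = Pow T \<and> prob_space M \<and>
        (\<forall>A\<subseteq>T. emeasure M A = 0 \<or> emeasure M A = 1) \<and>
        (\<forall>x\<in>T. emeasure M {x} = 0) \<and>
        (\<forall>F. F \<subseteq> {A. A \<subseteq> T \<and> emeasure M A = 0} \<and>
              (card_of F, card_of T) \<in> ordLess
              \<longrightarrow> emeasure M (\<Union>F) = 0))"

end

theory Submission
  imports Defs
begin

lemma ultra:
  assumes P: "prob_space M" and S: "sets M = Pow (space M)"
    and Z: "\<forall>A\<subseteq>space M. emeasure M A = 0 \<or> emeasure M A = 1"
  shows "(AE x in M. P x) \<or> (AE x in M. \<not> P x)"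
proof -
  interpret prob_space M by (rule P)
  let ?A = "{x\<in>space M. \<not> P x}"
  have "emeasure M ?A = 0 \<or> emeasure M ?A = 1" using Z by auto
  then show ?thesis
  proof
    assume "emeasure M ?A = 0"
    then have "?A \<in> null_sets M" using S by auto
    then show ?thesis by (subst AE_iff_null) (auto simp: S)
  next
    assume h: "emeasure M ?A = 1"
    have "emeasure M (space M - ?A) = 0"
      using h emeasure_compl[of ?A M] S emeasure_space_1 by auto
    moreover have "space M - ?A = {x\<in>space M. \<not>\<not> P x}" by auto
    ultimately have "{x\<in>space M. \<not>\<not> P x} \<in> null_sets M" using S by auto
    then show ?thesis by (subst (2) AE_iff_null) (auto simp: S)
  qed
qed

lemma ae_const:
  assumes P: "prob_space M" and S: "sets M = Pow (space M)"
    and Z: "\<forall>A\<subseteq>space M. emeasure M A = 0 \<or> emeasure M A = 1"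
  shows "\<exists>r. AE y in M. g y = (r::real)"
proof -
  interpret prob_space M by (rule P)
  note U = ultra[OF P S Z]
  have ex: "\<exists>n::nat. AE y in M. g y \<ge> - real n"
  proof (rule ccontr)
    assume "\<not> ?thesis"
    then have "\<forall>n::nat. AE y in M. \<not> g y \<ge> - real n" using U by blast
    then have "AE y in M. \<forall>n::nat. \<not> g y \<ge> - real n" by (simp add: AE_all_countable)
    moreover have "\<exists>n::nat. g y \<ge> - real n" for y
      by (metis reals_Archimedean2 minus_less_iff less_le_not_le linorder_linear)
    ultimately have "AE y in M. False" by (metis (mono_tags, lifting) eventually_mono)
    then show False by simp
  qed
  have ex2: "\<exists>n::nat. AE y in M. g y < real n"
  proof (rule ccontr)
    assume "\<not> ?thesis"
    then have "\<forall>n::nat. AE y in M. \<not> g y < real n" using U by blast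
    then have "AE y in M. \<forall>n::nat. \<not> g y < real n" by (simp add: AE_all_countable)
    moreover have "\<exists>n::nat. g y < real n" for y
      by (metis reals_Archimedean2)
    ultimately have "AE y in M. False" by (metis (mono_tags, lifting) eventually_mono)
    then show False by simp
  qed
  define S' where "S' = {q. AE y in M. g y \<ge> q}"
  obtain n0 :: nat where n0: "AE y in M. g y \<ge> - real n0" using ex by blast
  obtain n1 :: nat where n1: "AE y in M. g y < real n1" using ex2 by blast
  have ne: "S' \<noteq> {}" using n0 S'_def by auto
  have bdd: "q \<le> real n1" if "q \<in> S'" for q
  proof (rule ccontr)
    assume "\<not> q \<le> real n1"
    moreover have "AE y in M. g y \<ge> q" using that S'_def by auto
    ultimately have "AE y in M. False" using n1 eventually_mono eventually_conj by (smt (verit))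
    then show False by simp
  qed
  have bddS: "bdd_above S'" using bdd by (meson bdd_above.I)
  define r where "r = Sup S'"
  have up: "AE y in M. g y < r + 1 / (real k + 1)" for k :: nat
  proof -
    have "r + 1 / (real k + 1) \<notin> S'"
    proof
      assume "r + 1 / (real k + 1) \<in> S'"
      then have "r + 1 / (real k + 1) \<le> r" unfolding r_def using bddS by (rule cSup_upper)
      moreover have "1 / (real k + 1) > 0" by simp
      ultimately show False by linarith
    qed
    then have "\<not> (AE y in M. g y \<ge> r + 1 / (real k + 1))" using S'_def by auto
    then show ?thesis using U eventually_mono by (smt (verit))
  qed
  have lo: "AE y in M. g y > r - 1 / (real k + 1)" for k :: nat
  proof -
    have "r - 1 / (real k + 1) < Sup S'" unfolding r_def[symmetric] by simp
    then obtain q where "q \<in> S'" "r - 1 / (real k + 1) < q"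
      using less_cSup_iff[OF ne bddS] by blast
    then show ?thesis using S'_def eventually_mono by (smt (verit) mem_Collect_eq)
  qed
  have "AE y in M. \<forall>k::nat. g y < r + 1 / (real k + 1) \<and> g y > r - 1 / (real k + 1)"
    using up lo by (simp add: AE_all_countable AE_conj_iff)
  moreover have "g y = r" if "\<forall>k::nat. g y < r + 1 / (real k + 1) \<and> g y > r - 1 / (real k + 1)" for y
  proof (rule ccontr)
    assume "g y \<noteq> r"
    then have "\<bar>g y - r\<bar> > 0" by simp
    then obtain k :: nat where "1 / (real k + 1) < \<bar>g y - r\<bar>"
      by (metis nat_approx_posE of_nat_Suc add.commute)
    then show False using that[rule_format, of k] by linarith
  qed
  ultimately show ?thesis using eventually_mono by (smt (verit))
qed


theorem mainTheorem8:
  fixes \<Omega> :: "'a set" and d :: "'a \<Rightarrow> 'a \<Rightarrow> real" and T :: "'b set"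
  assumes "Metric_space \<Omega> d"
    and "two_valued_measurable T"
    and "(card_of T, card_of \<Omega>) \<in> ordLeq"
  shows "\<exists>r>0. \<exists>Y\<subseteq>\<Omega>. (card_of Y, card_of T) \<in> ordIso \<and>
           (\<forall>x\<in>Y. \<forall>y\<in>Y. x \<noteq> y \<longrightarrow> d x y = r)"
proof -
  interpret MS: Metric_space \<Omega> d by (rule assms(1))
  obtain M where sp: "space M = T" and St: "sets M = Pow T" and P: "prob_space M"
    and Z: "\<forall>A\<subseteq>T. emeasure M A = 0 \<or> emeasure M A = 1"
    and sing: "\<forall>x\<in>T. emeasure M {x} = 0"
    and cpl: "\<forall>F. F \<subseteq> {A. A \<subseteq> T \<and> emeasure M A = 0} \<and>
              (card_of F, card_of T) \<in> ordLess \<longrightarrow> emeasure M (\<Union>F) = 0"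
    using assms(2) unfolding two_valued_measurable_def by blast
  interpret prob_space M by (rule P)
  have S: "sets M = Pow (space M)" using St sp by simp
  have Z': "\<forall>A\<subseteq>space M. emeasure M A = 0 \<or> emeasure M A = 1" using Z sp by simp
  have "\<exists>f. inj_on f T \<and> f ` T \<subseteq> \<Omega>" using assms(3) card_of_ordLeq[of T \<Omega>] by simp
  then obtain f where f: "inj_on f T" "f ` T \<subseteq> \<Omega>" by blast
  define c where "c x y = d (f x) (f y)" for x y
  have nullI: "A \<in> null_sets M" if "A \<subseteq> T" "emeasure M A = 0" for A
    using that St by (intro null_setsI) auto
  have AE_null: "AE y in M. y \<notin> A" if "A \<subseteq> T" "emeasure M A = 0" for A
    using nullI[OF that] AE_iff_null_sets St that by blast
  have exAE: "\<exists>x\<in>T. Q x" if "AE x in M. Q x" for Q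
  proof (rule ccontr)
    assume nt: "\<not> ?thesis"
    have "AE x in M. False" using eventually_conj[OF that AE_space[of M]]
      by (rule eventually_mono) (use nt sp in auto)
    then show False by simp
  qed
  have Tinf: "infinite T"
  proof
    assume "finite T"
    then have "(\<Union>x\<in>T. {x}) \<in> null_sets M"
      by (intro null_sets_UN') (auto simp: countable_finite intro!: nullI sing[rule_format])
    then have "emeasure M T = 0" by (auto dest: null_setsD1)
    then show False using emeasure_space_1 sp by simp
  qed
  have "\<exists>v. AE y in M. c x y = v" for x using ae_const[OF P S Z'] by blast
  then obtain h where h: "\<And>x. AE y in M. c x y = h x" by metis
  obtain r where r: "AE x in M. h x = r" using ae_const[OF P S Z'] by blast
  define A where "A = {x\<in>T. h x = r}"
  have AEA: "AE x in M. x \<in> A" using r AE_space[of M] unfolding A_def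
    by eventually_elim (use sp in auto)
  have rpos: "r > 0"
  proof -
    obtain x where x: "x \<in> A" using exAE[OF AEA] by blast
    have "AE y in M. y \<notin> {x}" using AE_null[of "{x}"] sing x A_def by auto
    have "AE y in M. c x y = r \<and> y \<noteq> x \<and> y \<in> T"
      using h[of x] AE_space[of M] \<open>AE y in M. y \<notin> {x}\<close>
      by eventually_elim (use x sp A_def in auto)
    then obtain y where y: "y \<in> T" "c x y = r" "y \<noteq> x" using exAE by blast
    have "f y \<noteq> f x" using f(1) y x A_def inj_on_def by (metis (no_types, lifting) mem_Collect_eq)
    moreover have "f x \<in> \<Omega>" "f y \<in> \<Omega>" using f(2) x y A_def by auto
    ultimately have "d (f x) (f y) \<noteq> 0" using MS.zero by metis
    then show ?thesis using y c_def MS.nonneg[of "f x" "f y"] by auto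
  qed
  define \<F> where "\<F> = {Y. Y \<subseteq> A \<and> (\<forall>x\<in>Y. \<forall>y\<in>Y. x \<noteq> y \<longrightarrow> c x y = r)}"
  have "\<forall>C\<in>chains \<F>. \<Union>C \<in> \<F>"
  proof
    fix C assume C: "C \<in> chains \<F>"
    show "\<Union>C \<in> \<F>" unfolding \<F>_def
    proof (intro CollectI conjI ballI impI)
      show "\<Union>C \<subseteq> A" using chainsD2[OF C] \<F>_def by auto
    next
      fix x y assume xy: "x \<in> \<Union>C" "y \<in> \<Union>C" "x \<noteq> y"
      then obtain X Y where XY: "X \<in> C" "Y \<in> C" "x \<in> X" "y \<in> Y" by blast
      then have "X \<subseteq> Y \<or> Y \<subseteq> X" using chainsD[OF C] by blast
      then show "c x y = r" using XY xy chainsD2[OF C] \<F>_def by blast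
    qed
  qed
  then obtain Y where Y: "Y \<in> \<F>" and maxY: "\<forall>X\<in>\<F>. Y \<subseteq> X \<longrightarrow> X = Y"
    using Zorn_Lemma by blast
  have YA: "Y \<subseteq> A" and Yh: "\<forall>x\<in>Y. \<forall>y\<in>Y. x \<noteq> y \<longrightarrow> c x y = r" using Y \<F>_def by auto
  have YT: "Y \<subseteq> T" using YA A_def by auto
  have notless: "\<not> (card_of (Y), card_of (T)) \<in> ordLess"
  proof
    assume less: "(card_of (Y), card_of (T)) \<in> ordLess"
    define g where "g y = {z\<in>T. c y z \<noteq> r} \<union> {y}" for y
    define G where "G = {T - A} \<union> g ` Y"
    have G1: "(card_of ({T - A}), card_of (T)) \<in> ordLess"
      using Tinf finite_iff_ordLess_natLeq infinite_iff_natLeq_ordLeq ordLess_ordLeq_trans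
      by (metis finite.emptyI finite_insert)
    have G2: "(card_of (g ` Y), card_of (T)) \<in> ordLess" using card_of_image less ordLeq_ordLess_trans by blast
    have Gc: "(card_of (G), card_of (T)) \<in> ordLess" unfolding G_def using card_of_Un_ordLess_infinite[OF Tinf G1 G2] .
    have "T - A \<in> null_sets M"
      using AEA AE_iff_null_sets[of "T - A" M] St by auto
    then have n1: "emeasure M (T - A) = 0" by (auto dest: null_setsD1)
    have n2: "emeasure M (g y) = 0" if "y \<in> Y" for y
    proof -
      have yA: "y \<in> A" using that YA by auto
      have "AE z in M. c y z = r" using h[of y]
        by eventually_elim (use yA A_def in auto)
      then have "{z\<in>space M. \<not> c y z = r} \<in> null_sets M"
        by (subst (asm) AE_iff_null) (auto simp: S)
      moreover have "{y} \<in> null_sets M" using nullI sing yA A_def by auto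
      ultimately have "{z\<in>space M. \<not> c y z = r} \<union> {y} \<in> null_sets M" by (rule null_sets.Un)
      moreover have "g y = {z\<in>space M. \<not> c y z = r} \<union> {y}" unfolding g_def using sp by simp
      ultimately have "g y \<in> null_sets M" by simp
      then show ?thesis by (auto dest: null_setsD1)
    qed
    have "G \<subseteq> {B. B \<subseteq> T \<and> emeasure M B = 0}"
      unfolding G_def using n1 n2 YT by (auto simp: g_def)
    then have "emeasure M (\<Union>G) = 0" using cpl Gc by blast
    moreover have "\<Union>G \<subseteq> T" unfolding G_def g_def using YT by auto
    ultimately obtain z where z: "z \<in> T" "z \<notin> \<Union>G"
      using emeasure_space_1 sp by (metis subsetI subset_antisym zero_neq_one)
    have zA: "z \<in> A" using z G_def by auto
    have zY: "z \<notin> Y" using z G_def g_def by auto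
    have czr: "c y z = r" if "y \<in> Y" for y using z that G_def g_def by auto
    have "insert z Y \<in> \<F>"
      unfolding \<F>_def using YA zA Yh czr MS.commute c_def by auto
    then show False using maxY zY by blast
  qed
  have "(card_of (T), card_of (Y)) \<in> ordLeq" using notless ordLess_or_ordLeq card_of_Well_order by blast
  moreover have "(card_of (Y), card_of (T)) \<in> ordLeq" using YT card_of_mono1 by blast
  ultimately have YTiso: "(card_of (Y), card_of (T)) \<in> ordIso" using ordIso_iff_ordLeq by blast
  have "bij_betw f Y (f ` Y)" using f(1) YT inj_on_subset bij_betw_imageI by blast
  then have "(card_of (f ` Y), card_of (Y)) \<in> ordIso" using card_of_ordIso ordIso_symmetric by blast
  then have iso: "(card_of (f ` Y), card_of (T)) \<in> ordIso" using YTiso ordIso_transitive by blast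
  have "\<forall>x\<in>f ` Y. \<forall>y\<in>f ` Y. x \<noteq> y \<longrightarrow> d x y = r" using Yh c_def by auto
  moreover have "f ` Y \<subseteq> \<Omega>" using f YT by auto
  ultimately show ?thesis using rpos iso by blast
qed

end
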